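(* Let $p\in L^\infty(Q_T)$, and let $u\in\mathbb Z^1$ with $u\ge0$ in $Q_T$ satisfy $\partial_tu\ge\int_\Omega J(x,y)u(y,t)\,dy+p(x,t)u$ for $(x,t)\in Q_T$. If $u(x_0,t_0)=0$ for some $(x_0,t_0)\in Q_T$, then $u(x_0,t)=0$ for all $t\in[0,t_0]$.
   Context: $\Omega\subset\mathbb R^N$ bounded with smooth boundary, $T>0$, $Q_T=\bar\Omega\times(0,T]$. $J:\mathbb R^{2N}\to[0,\infty)$ is continuous with $J(x,x)>0$ and $\int_{\mathbb R^N}J(x,y)dy=1$. $\mathbb Z^1$ is the set of $u\in L^\infty(Q_T)$ with $u(x,\cdot)\in C^1([0,T])$ for every $x\in\bar\Omega$. *)

theory Defs
  imports "HOL-Analysis.Analysis"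
begin

coinductive smooth_fun :: "('a::euclidean_space \<Rightarrow> real) \<Rightarrow> bool" where
  "(\<forall>x. g differentiable (at x)) \<Longrightarrow>
   (\<forall>b\<in>Basis. smooth_fun (\<lambda>x. frechet_derivative g (at x) b)) \<Longrightarrow> smooth_fun g"

definition smooth_bounded_domain :: "'a::euclidean_space set \<Rightarrow> bool" where
  "smooth_bounded_domain \<Omega> \<longleftrightarrow> open \<Omega> \<and> bounded \<Omega> \<and>
     (\<exists>\<phi>. smooth_fun \<phi> \<and> \<Omega> = {x. \<phi> x < 0} \<and>
          (\<forall>x. \<phi> x = 0 \<longrightarrow> (\<exists>b\<in>Basis. frechet_derivative \<phi> (at x) b \<noteq> 0)))"

definition QT :: "'a::euclidean_space set \<Rightarrow> real \<Rightarrow> ('a \<times> real) set" where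
  "QT \<Omega> T = closure \<Omega> \<times> {0<..T}"

text \<open>L-infinity on Q_T: measurable and bounded (the pointwise inequalities in the
  statement refer to the given representative).\<close>
definition Linf :: "'a::euclidean_space set \<Rightarrow> real \<Rightarrow> ('a \<Rightarrow> real \<Rightarrow> real) \<Rightarrow> bool" where
  "Linf \<Omega> T u \<longleftrightarrow> set_borel_measurable lborel (QT \<Omega> T) (\<lambda>(x,t). u x t) \<and>
     (\<exists>M. \<forall>(x,t)\<in>QT \<Omega> T. \<bar>u x t\<bar> \<le> M)"

definition C1_interval :: "real \<Rightarrow> (real \<Rightarrow> real) \<Rightarrow> bool" where
  "C1_interval T f \<longleftrightarrow> (\<exists>f'. continuous_on {0..T} f' \<and>
     (\<forall>t\<in>{0..T}. (f has_real_derivative f' t) (at t within {0..T})))"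

definition Z1 :: "'a::euclidean_space set \<Rightarrow> real \<Rightarrow> ('a \<Rightarrow> real \<Rightarrow> real) set" where
  "Z1 \<Omega> T = {u. Linf \<Omega> T u \<and> (\<forall>x\<in>closure \<Omega>. C1_interval T (u x))}"

end

theory Submission
  imports Defs
begin

theorem corollary4p1:
  fixes \<Omega> :: "'a::euclidean_space set" and T :: real
    and J :: "'a \<Rightarrow> 'a \<Rightarrow> real" and p u :: "'a \<Rightarrow> real \<Rightarrow> real"
    and x0 :: 'a and t0 :: real
  assumes dom: "smooth_bounded_domain \<Omega>"
    and T: "T > 0"
    and J_cont: "continuous_on UNIV (\<lambda>(x,y). J x y)"
    and J_nonneg: "\<And>x y. J x y \<ge> 0"
    and J_diag: "\<And>x. J x x > 0"
    and J_int: "\<And>x. integrable lborel (J x) \<and> integral\<^sup>L lborel (J x) = 1"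
    and p: "Linf \<Omega> T p"
    and u: "u \<in> Z1 \<Omega> T"
    and u_nonneg: "\<And>x t. (x,t) \<in> QT \<Omega> T \<Longrightarrow> u x t \<ge> 0"
    and ineq: "\<And>x t D. (x,t) \<in> QT \<Omega> T \<Longrightarrow>
                 (u x has_real_derivative D) (at t within {0..T}) \<Longrightarrow>
                 D \<ge> (LINT y:\<Omega>|lborel. J x y * u y t) + p x t * u x t"
    and pt: "(x0,t0) \<in> QT \<Omega> T"
    and zero: "u x0 t0 = 0"
  shows "\<forall>t\<in>{0..t0}. u x0 t = 0"
proof -
  have x0: "x0 \<in> closure \<Omega>" and t0: "0 < t0" "t0 \<le> T" using pt by (auto simp: QT_def)
  obtain M where M: "\<forall>(x,t)\<in>QT \<Omega> T. \<bar>p x t\<bar> \<le> M" using p by (auto simp: Linf_def)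
  define f where "f = u x0"
  obtain f' where cf': "continuous_on {0..T} f'"
    and df: "\<And>t. t \<in> {0..T} \<Longrightarrow> (f has_real_derivative f' t) (at t within {0..T})"
    using u x0 by (auto simp: Z1_def C1_interval_def f_def)
  have fcont: "continuous_on {0..T} f"
    using df by (metis DERIV_continuous continuous_on_eq_continuous_within)
  have fnn: "\<And>t. 0 < t \<Longrightarrow> t \<le> T \<Longrightarrow> f t \<ge> 0"
    using u_nonneg x0 by (auto simp: QT_def f_def)
  have f'ge: "f' t \<ge> - M * f t" if "0 < t" "t \<le> T" for t
  proof -
    have q: "(x0,t) \<in> QT \<Omega> T" using that x0 by (auto simp: QT_def)
    have "(LINT y:\<Omega>|lborel. J x0 y * u y t) \<ge> 0"
      unfolding set_lebesgue_integral_def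
    proof (rule integral_nonneg_AE, rule AE_I2)
      fix y
      show "0 \<le> indicator \<Omega> y *\<^sub>R (J x0 y * u y t)"
      proof (cases "y \<in> \<Omega>")
        case True
        then have "(y,t) \<in> QT \<Omega> T" using that closure_subset by (auto simp: QT_def)
        then show ?thesis using True J_nonneg[of x0 y] u_nonneg by simp
      qed simp
    qed
    moreover have "f' t \<ge> (LINT y:\<Omega>|lborel. J x0 y * u y t) + p x0 t * u x0 t"
      using ineq[OF q] df[of t] that by (simp add: f_def)
    moreover have "\<bar>p x0 t\<bar> \<le> M" using M q by auto
    moreover have "f t \<ge> 0" using fnn that by simp
    ultimately show ?thesis unfolding f_def
      by (smt (verit, best) abs_le_D2 mult_right_mono f_def)
  qed
  define g where "g t = exp (M * t) * f t" for t
  have gmono: "g a \<le> g b" if "0 \<le> a" "a \<le> b" "b \<le> T" for a b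
  proof (rule DERIV_nonneg_imp_increasing_open[OF \<open>a \<le> b\<close>])
    fix t assume t: "a < t" "t < b"
    have "at t within {0..T} = at t" using t that by (intro at_within_Icc_at) auto
    then have d: "(f has_real_derivative f' t) (at t)" using df[of t] t that by auto
    have "(g has_real_derivative exp (M*t) * M * f t + exp (M*t) * f' t) (at t)"
      unfolding g_def by (auto intro!: derivative_eq_intros d)
    moreover have "exp (M*t) * M * f t + exp (M*t) * f' t = exp (M*t) * (f' t + M * f t)"
      by (simp add: algebra_simps)
    moreover have "f' t + M * f t \<ge> 0" using f'ge[of t] t that by simp
    ultimately show "\<exists>y. (g has_real_derivative y) (at t) \<and> 0 \<le> y" by auto
  next
    show "continuous_on {a..b} g" unfolding g_def using that
      by (intro continuous_intros continuous_on_subset[OF fcont]) auto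
  qed
  have g0: "g t0 = 0" using zero by (simp add: g_def f_def)
  have f00: "f 0 \<ge> 0"
  proof -
    have "(f \<longlongrightarrow> f 0) (at 0 within {0<..T})"
      using fcont T unfolding continuous_on_def
      by (metis atLeastAtMost_iff greaterThanAtMost_iff less_eq_real_def order_refl
          tendsto_within_subset subsetI)
    moreover have "at 0 within {0<..T} \<noteq> bot"
      using T by (simp add: at_within_eq_bot_iff)
    moreover have "eventually (\<lambda>t. f t \<ge> 0) (at 0 within {0<..T})"
      unfolding eventually_at_filter by (auto intro!: always_eventually fnn)
    ultimately show ?thesis using tendsto_lowerbound by (metis trivial_limit_def)
  qed
  show ?thesis
  proof
    fix t assume t: "t \<in> {0..t0}"
    have "g t \<le> 0" using gmono[of t t0] t t0 g0 by auto
    moreover have "f t \<ge> 0" using fnn[of t] f00 t t0 by (cases "t = 0") auto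
    ultimately show "u x0 t = 0" unfolding g_def f_def
      by (smt (verit) exp_gt_zero mult_pos_pos f_def)
  qed
qed

end
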